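(* Let $A$ be a finite interval of integers and let $G$ be a signed digraph on $[n]$. If $G$ admits a nilpotent function over $A$, then for every initial strong component $I$ of $G$, the induced signed subgraph $G[I]$ admits a nilpotent function over $A$. Conversely, if every initial strong component $I$ of $G$ is such that $G[I]$ admits a nilpotent function over $A$, and moreover either $|A|\geq 3$, or $|A|=2$ and every unsigned arc of $G$ has both endpoints in the same initial strong component of $G$, then $G$ admits a nilpotent function over $A$.
   Context: A signed digraph is a digraph (loops allowed, no multiple arcs) in which each arc is labeled positive, negative, or null (unsigned). For a finite interval of integers $A$ and a finite vertex set $V$, a function over $A$ on $V$ is a map $f:A^V\to A^V$; $f^0=\mathrm{id}$, $f^k=f\circ f^{k-1}$. Its interaction graph $G(f)$ is the signed digraph on $V$ with an arc $(j,i)$ iff $f_i(a)\neq f_i(b)$ for some $a,b$ with $a_j<b_j$ and $a_\ell=b_\ell$ for $\ell\neq j$; such an arc is positive if $f_i(a)\leq f_i(b)$ for all such pairs, negative if $f_i(a)\geq f_i(b)$ for all such pairs, and null otherwise. A signed digraph $G$ admits $f$ if $G(f)=G$. $f$ is nilpotent if $f^k$ is constant for some $k$. A strong component of $G$ is a strongly connected component; it is initial if there is no arc $(u,v)$ of $G$ with $u\notin I$ and $v\in I$. $G[I]$ denotes the subgraph induced by $I$ (with inherited signs). *)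

theory Defs
  imports "HOL-Library.FuncSet"
begin

datatype sign = Pos | Neg | Null

text \<open>A signed digraph on vertex set V: a partial arc labelling
  G :: 'v \<times> 'v \<Rightarrow> sign option, where G (j,i) = Some s means there is an arc (j,i)
  with sign s (loops allowed, no multiple arcs).\<close>

definition signed_digraph :: "'v set \<Rightarrow> ('v \<times> 'v \<Rightarrow> sign option) \<Rightarrow> bool" where
  "signed_digraph V G \<longleftrightarrow> dom G \<subseteq> V \<times> V"

definition arcs :: "('v \<times> 'v \<Rightarrow> sign option) \<Rightarrow> ('v \<times> 'v) set" where
  "arcs G = dom G"

definition confs :: "'v set \<Rightarrow> int set \<Rightarrow> ('v \<Rightarrow> int) set" where
  "confs V A = PiE V (\<lambda>_. A)"

definition is_fun_over :: "'v set \<Rightarrow> int set \<Rightarrow> (('v \<Rightarrow> int) \<Rightarrow> ('v \<Rightarrow> int)) \<Rightarrow> bool" where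
  "is_fun_over V A f \<longleftrightarrow> f \<in> confs V A \<rightarrow> confs V A"

definition jpairs :: "'v set \<Rightarrow> int set \<Rightarrow> 'v \<Rightarrow> (('v \<Rightarrow> int) \<times> ('v \<Rightarrow> int)) set" where
  "jpairs V A j = {(a, b). a \<in> confs V A \<and> b \<in> confs V A \<and> a j < b j \<and>
                           (\<forall>l\<in>V. l \<noteq> j \<longrightarrow> a l = b l)}"

definition interaction_graph ::
  "'v set \<Rightarrow> int set \<Rightarrow> (('v \<Rightarrow> int) \<Rightarrow> ('v \<Rightarrow> int)) \<Rightarrow> ('v \<times> 'v \<Rightarrow> sign option)" where
  "interaction_graph V A f = (\<lambda>(j, i).
     if j \<in> V \<and> i \<in> V \<and> (\<exists>(a, b) \<in> jpairs V A j. f a i \<noteq> f b i) then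
       (if \<forall>(a, b) \<in> jpairs V A j. f a i \<le> f b i then Some Pos
        else if \<forall>(a, b) \<in> jpairs V A j. f a i \<ge> f b i then Some Neg
        else Some Null)
     else None)"

definition nilpotent :: "'v set \<Rightarrow> int set \<Rightarrow> (('v \<Rightarrow> int) \<Rightarrow> ('v \<Rightarrow> int)) \<Rightarrow> bool" where
  "nilpotent V A f \<longleftrightarrow> (\<exists>k c. \<forall>x \<in> confs V A. (f ^^ k) x = c)"

definition admits :: "'v set \<Rightarrow> int set \<Rightarrow> ('v \<times> 'v \<Rightarrow> sign option)
    \<Rightarrow> (('v \<Rightarrow> int) \<Rightarrow> ('v \<Rightarrow> int)) \<Rightarrow> bool" where
  "admits V A G f \<longleftrightarrow> is_fun_over V A f \<and> interaction_graph V A f = G"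

definition admits_nilpotent :: "'v set \<Rightarrow> int set \<Rightarrow> ('v \<times> 'v \<Rightarrow> sign option) \<Rightarrow> bool" where
  "admits_nilpotent V A G \<longleftrightarrow> (\<exists>f. admits V A G f \<and> nilpotent V A f)"

definition strong_component :: "'v set \<Rightarrow> ('v \<times> 'v \<Rightarrow> sign option) \<Rightarrow> 'v set \<Rightarrow> bool" where
  "strong_component V G I \<longleftrightarrow>
     (\<exists>u\<in>V. I = {v \<in> V. (u, v) \<in> (arcs G)\<^sup>* \<and> (v, u) \<in> (arcs G)\<^sup>*})"

definition initial_strong_component :: "'v set \<Rightarrow> ('v \<times> 'v \<Rightarrow> sign option) \<Rightarrow> 'v set \<Rightarrow> bool" where
  "initial_strong_component V G I \<longleftrightarrow> strong_component V G I \<and>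
     (\<forall>(u, v) \<in> arcs G. u \<notin> I \<longrightarrow> v \<notin> I)"

definition induced :: "('v \<times> 'v \<Rightarrow> sign option) \<Rightarrow> 'v set \<Rightarrow> ('v \<times> 'v \<Rightarrow> sign option)" where
  "induced G I = (\<lambda>e. if e \<in> I \<times> I then G e else None)"

end

theory Submission imports Defs begin

definition allp :: "'v set \<Rightarrow> int set \<Rightarrow> (('v \<Rightarrow> int) \<Rightarrow> ('v \<Rightarrow> int)) \<Rightarrow> 'v \<Rightarrow> 'v \<Rightarrow> (int \<Rightarrow> int \<Rightarrow> bool) \<Rightarrow> bool" where
 "allp V A f j i P \<longleftrightarrow> (\<forall>(a,b)\<in>jpairs V A j. P (f a i) (f b i))"

lemma IG_alt: "interaction_graph V A f (j,i) = (if j\<in>V \<and> i\<in>V \<and> \<not> allp V A f j i (=) then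
   (if allp V A f j i (\<le>) then Some Pos else if allp V A f j i (\<lambda>x y. x \<ge> y) then Some Neg else Some Null) else None)"
  unfolding interaction_graph_def allp_def by auto

definition allg :: "int set \<Rightarrow> (int \<Rightarrow> int) \<Rightarrow> (int \<Rightarrow> int \<Rightarrow> bool) \<Rightarrow> bool" where
 "allg A g P \<longleftrightarrow> (\<forall>x\<in>A. \<forall>y\<in>A. x < y \<longrightarrow> P (g x) (g y))"

definition signof :: "int set \<Rightarrow> (int \<Rightarrow> int) \<Rightarrow> sign option" where
 "signof A g = (if \<not> allg A g (=) then (if allg A g (\<le>) then Some Pos
    else if allg A g (\<lambda>x y. x \<ge> y) then Some Neg else Some Null) else None)"

lemma signof_cong: assumes "\<forall>y\<in>A. g y = g' y" shows "signof A g = signof A g'"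
proof -
  have "\<And>P. allg A g P = allg A g' P" unfolding allg_def using assms by simp
  then show ?thesis unfolding signof_def by simp
qed

lemma not_allg: "x \<in> A \<Longrightarrow> y \<in> A \<Longrightarrow> x < y \<Longrightarrow> \<not> P (g x) (g y) \<Longrightarrow> \<not> allg A g P"
  unfolding allg_def by blast

lemma signof_thr: assumes "lo \<le> t" "t < hi" "H \<noteq> L"
  shows "signof {lo..hi} (\<lambda>y. if t < y then H else L) = Some (if L < H then Pos else Neg)"
proof -
  have tt: "t \<in> {lo..hi}" "t+1 \<in> {lo..hi}" "t < t+1" using assms by auto
  have ne: "\<not> allg {lo..hi} (\<lambda>y. if t < y then H else L) (=)"
    by (rule not_allg[OF tt]) (use assms in auto)
  show ?thesis
  proof (cases "L < H")
    case True
    then show ?thesis using ne unfolding signof_def allg_def by auto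
  next
    case False
    then have "H < L" using assms by auto
    moreover have "\<not> allg {lo..hi} (\<lambda>y. if t < y then H else L) (\<le>)"
      by (rule not_allg[OF tt]) (use \<open>H < L\<close> in auto)
    ultimately show ?thesis using ne False unfolding signof_def allg_def by auto
  qed
qed

lemma signof_null1: assumes "lo < m" "m < hi" "H \<noteq> L"
  shows "signof {lo..hi} (\<lambda>y. if y = m then H else L) = Some Null"
proof -
  have t1: "lo \<in> {lo..hi}" "m \<in> {lo..hi}" "lo < m" and t2: "m \<in> {lo..hi}" "hi \<in> {lo..hi}" "m < hi"
    using assms by auto
  have c: "\<not> allg {lo..hi} (\<lambda>y. if y = m then H else L) (=)"
    by (rule not_allg[OF t1]) (use assms in auto)
  have ab: "\<not> allg {lo..hi} (\<lambda>y. if y = m then H else L) (\<le>) \<and>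
     \<not> allg {lo..hi} (\<lambda>y. if y = m then H else L) (\<lambda>x y. x \<ge> y)"
  proof (cases "L < H")
    case True
    then show ?thesis using not_allg[OF t1, of "\<lambda>x y. x \<ge> y"] not_allg[OF t2, of "(\<le>)"] assms by auto
  next
    case False
    then show ?thesis using not_allg[OF t1, of "(\<le>)"] not_allg[OF t2, of "\<lambda>x y. x \<ge> y"] assms by auto
  qed
  show ?thesis using ab c unfolding signof_def by auto
qed

lemma signof_null2: assumes "lo + 1 < hi" "H \<noteq> L"
  shows "signof {lo..hi} (\<lambda>y. if y = lo \<or> y = hi then H else L) = Some Null"
proof -
  have t1: "lo \<in> {lo..hi}" "lo+1 \<in> {lo..hi}" "lo < lo+1" and t2: "lo+1 \<in> {lo..hi}" "hi \<in> {lo..hi}" "lo+1 < hi"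
    using assms by auto
  have c: "\<not> allg {lo..hi} (\<lambda>y. if y = lo \<or> y = hi then H else L) (=)"
    by (rule not_allg[OF t1]) (use assms in auto)
  have ab: "\<not> allg {lo..hi} (\<lambda>y. if y = lo \<or> y = hi then H else L) (\<le>) \<and>
     \<not> allg {lo..hi} (\<lambda>y. if y = lo \<or> y = hi then H else L) (\<lambda>x y. x \<ge> y)"
  using not_allg[OF t1, of "(\<le>)" "\<lambda>y. if y = lo \<or> y = hi then H else L"]
    not_allg[OF t2, of "\<lambda>x y. x \<ge> y" "\<lambda>y. if y = lo \<or> y = hi then H else L"]
    not_allg[OF t1, of "\<lambda>x y. x \<ge> y" "\<lambda>y. if y = lo \<or> y = hi then H else L"]
    not_allg[OF t2, of "(\<le>)" "\<lambda>y. if y = lo \<or> y = hi then H else L"] assms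
    by (cases "L < H") auto
  show ?thesis using ab c unfolding signof_def by auto
qed


lemma gadget_allp:
  assumes fi: "\<forall>x\<in>confs V A. f x i = (if (\<forall>w\<in>N-{j}. Pw w (x w)) then g (x j) else L)"
   and NV: "N \<subseteq> V" and j: "j \<in> V" and ne: "\<forall>w\<in>N. \<exists>z\<in>A. Pw w z" and A: "lo \<in> A"
   and refl: "P L L"
  shows "allp V A f j i P \<longleftrightarrow> allg A g P"
proof
  define a0 where "a0 = (\<lambda>w. if w\<in>V then (if w\<in>N then (SOME z. z\<in>A \<and> Pw w z) else lo) else undefined)"
  have a0N: "w \<in> N \<Longrightarrow> a0 w \<in> A \<and> Pw w (a0 w)" for w
    using ne NV unfolding a0_def by (auto intro: someI2_bex)
  have "a0 w \<in> A" if "w \<in> V" for w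
  proof (cases "w \<in> N")
    case True then show ?thesis using a0N by auto
  next
    case False then show ?thesis using that A by (simp add: a0_def)
  qed
  then have a0c: "a0 \<in> confs V A" unfolding confs_def PiE_iff extensional_def
    by (auto simp: a0_def)
  have upd: "z \<in> A \<Longrightarrow> a0(j:=z) \<in> confs V A" for z
    using a0c j unfolding confs_def PiE_iff extensional_def by auto
  {
    assume H: "allp V A f j i P"
    show "allg A g P" unfolding allg_def
    proof (intro ballI impI)
      fix x y assume xy: "x \<in> A" "y \<in> A" "x < y"
      have "(a0(j:=x), a0(j:=y)) \<in> jpairs V A j"
        unfolding jpairs_def using upd xy by auto
      then have "P (f (a0(j:=x)) i) (f (a0(j:=y)) i)" using H unfolding allp_def by auto
      moreover have "\<forall>w\<in>N-{j}. Pw w ((a0(j:=x)) w)" "\<forall>w\<in>N-{j}. Pw w ((a0(j:=y)) w)"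
        using a0N by auto
      ultimately show "P (g x) (g y)" using fi upd xy by simp
    qed
  }
  {
    assume H: "allg A g P"
    show "allp V A f j i P" unfolding allp_def
    proof (clarify)
      fix a b assume ab: "(a,b) \<in> jpairs V A j"
      then have ac: "a \<in> confs V A" "b \<in> confs V A" "a j < b j" "\<forall>l\<in>V. l \<noteq> j \<longrightarrow> a l = b l"
        unfolding jpairs_def by auto
      have AB: "a j \<in> A" "b j \<in> A" using ac(1,2) j unfolding confs_def by auto
      have "\<forall>w\<in>N-{j}. a w = b w" using ac(4) NV by auto
      then have eq: "(\<forall>w\<in>N-{j}. Pw w (a w)) = (\<forall>w\<in>N-{j}. Pw w (b w))"
        by auto
      show "P (f a i) (f b i)"
        using fi ac(1,2) eq H AB ac(3) refl unfolding allg_def by auto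
    qed
  }
qed

lemma gadget_IG:
  assumes fi: "\<forall>x\<in>confs V A. f x i = (if (\<forall>w\<in>N. Pw w (x w)) then H else L)"
   and NV: "N \<subseteq> V" and j: "j \<in> V" and i: "i \<in> V" and ne: "\<forall>w\<in>N. \<exists>z\<in>A. Pw w z" and A: "lo \<in> A"
  shows "interaction_graph V A f (j,i) = (if j \<in> N then signof A (\<lambda>y. if Pw j y then H else L) else None)"
proof (cases "j \<in> N")
  case True
  have fi': "\<forall>x\<in>confs V A. f x i = (if (\<forall>w\<in>N-{j}. Pw w (x w)) then (\<lambda>y. if Pw j y then H else L) (x j) else L)"
    using fi True by (auto split: if_splits)
  note G = gadget_allp[where Pw=Pw and N=N and L=L and j=j and f=f and i=i and V=V and A=A and g="\<lambda>y. if Pw j y then H else L", OF fi' NV j ne A]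
  show ?thesis unfolding IG_alt signof_def using True j i G[of "(=)"] G[of "(\<le>)"] G[of "\<lambda>x y. x \<ge> y"]
    by simp
next
  case False
  have fi': "\<forall>x\<in>confs V A. f x i = (if (\<forall>w\<in>N-{j}. Pw w (x w)) then (\<lambda>y. H) (x j) else L)"
    using fi False by auto
  note G = gadget_allp[where Pw=Pw and N=N and L=L and j=j and f=f and i=i and V=V and A=A and g="\<lambda>y. H", OF fi' NV j ne A]
  show ?thesis unfolding IG_alt using False G[of "(=)"] by (simp add: allg_def)
qed


lemma funpow_in: "is_fun_over V A f \<Longrightarrow> x \<in> confs V A \<Longrightarrow> (f ^^ m) x \<in> confs V A"
  unfolding is_fun_over_def by (induction m) auto

lemma nodep_pair:
  assumes "interaction_graph V A f (j,i) = None" "j\<in>V" "i\<in>V" "(a,b)\<in>jpairs V A j"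
  shows "f a i = f b i"
  using assms unfolding interaction_graph_def by (auto split: if_splits)

lemma nodep_coord:
  assumes none: "\<forall>j\<in>V. j \<notin> I \<longrightarrow> interaction_graph V A f (j,i) = None" and i: "i\<in>V"
  shows "finite D \<Longrightarrow> D \<subseteq> V - I \<Longrightarrow> x \<in> confs V A \<Longrightarrow> y \<in> confs V A \<Longrightarrow> (\<forall>v\<in>V-D. x v = y v) \<Longrightarrow> f x i = f y i"
proof (induction D arbitrary: x rule: finite_induct)
  case empty
  then have "x = y" unfolding confs_def PiE_iff extensional_def by (auto intro!: ext)
  then show ?case by simp
next
  case (insert d D)
  have d: "d \<in> V" "d \<notin> I" using insert.prems by auto
  define z where "z = x(d := y d)"
  have yd: "y d \<in> A" using insert.prems(3) d unfolding confs_def by auto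
  have zc: "z \<in> confs V A" using insert.prems(2) d yd unfolding z_def confs_def PiE_iff extensional_def by auto
  have n: "interaction_graph V A f (d,i) = None" using none d by auto
  have xz: "f x i = f z i"
  proof (cases "x d" "y d" rule: linorder_cases)
    case less
    then have "(x,z) \<in> jpairs V A d" unfolding jpairs_def z_def using insert.prems(2) zc z_def by auto
    then show ?thesis using nodep_pair[OF n d(1) i] by blast
  next
    case equal
    then have "z = x" unfolding z_def by auto
    then show ?thesis by simp
  next
    case greater
    then have "(z,x) \<in> jpairs V A d" unfolding jpairs_def z_def using insert.prems(2) zc z_def by auto
    then show ?thesis using nodep_pair[OF n d(1) i] by metis
  qed
  have "f z i = f y i"
  proof (rule insert.IH)
    show "D \<subseteq> V - I" using insert.prems by auto
    show "z \<in> confs V A" by (rule zc)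
    show "y \<in> confs V A" using insert.prems by auto
    show "\<forall>v\<in>V - D. z v = y v" using insert.prems by (auto simp: z_def)
  qed
  then show ?case using xz by simp
qed

lemma nodep:
  assumes none: "\<forall>j\<in>V. j \<notin> I \<longrightarrow> interaction_graph V A f (j,i) = None" and i: "i\<in>V"
    and fin: "finite V" and x: "x \<in> confs V A" and y: "y \<in> confs V A" and agree: "\<forall>v\<in>I. x v = y v"
  shows "f x i = f y i"
  by (rule nodep_coord[OF none i, of "V - I"]) (use fin x y agree in auto)

lemma restr_allp:
  assumes IV: "I \<subseteq> V" and j: "j \<in> I" and z0: "z0 \<in> A"
    and fh: "\<forall>x\<in>confs V A. f x i = h (restrict x I) i"
  shows "allp V A f j i P \<longleftrightarrow> allp I A h j i P"
proof
  assume H: "allp V A f j i P"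
  show "allp I A h j i P" unfolding allp_def
  proof clarify
    fix a b assume ab: "(a,b) \<in> jpairs I A j"
    define ea where "ea = (\<lambda>v. if v\<in>I then a v else if v\<in>V then z0 else undefined)"
    define eb where "eb = (\<lambda>v. if v\<in>I then b v else if v\<in>V then z0 else undefined)"
    have ac: "a \<in> confs I A" "b \<in> confs I A" "a j < b j" "\<forall>l\<in>I. l \<noteq> j \<longrightarrow> a l = b l"
      using ab unfolding jpairs_def by auto
    have eac: "ea \<in> confs V A" "eb \<in> confs V A"
      using ac(1,2) IV z0 unfolding ea_def eb_def confs_def PiE_iff extensional_def by auto
    have r: "restrict ea I = a" "restrict eb I = b"
      using ac(1,2) unfolding ea_def eb_def confs_def PiE_iff extensional_def restrict_def by (auto intro!: ext)
    have "(ea, eb) \<in> jpairs V A j" unfolding jpairs_def using eac ac j IV unfolding ea_def eb_def by auto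
    then have "P (f ea i) (f eb i)" using H unfolding allp_def by auto
    then show "P (h a i) (h b i)" using fh eac r by auto
  qed
next
  assume H: "allp I A h j i P"
  show "allp V A f j i P" unfolding allp_def
  proof clarify
    fix a b assume ab: "(a,b) \<in> jpairs V A j"
    have ac: "a \<in> confs V A" "b \<in> confs V A" "a j < b j" "\<forall>l\<in>V. l \<noteq> j \<longrightarrow> a l = b l"
      using ab unfolding jpairs_def by auto
    have "(restrict a I, restrict b I) \<in> jpairs I A j"
      unfolding jpairs_def using ac IV j unfolding confs_def PiE_iff by auto
    then have "P (h (restrict a I) i) (h (restrict b I) i)" using H unfolding allp_def by auto
    then show "P (f a i) (f b i)" using fh ac by auto
  qed
qed

lemma restr_IG:
  assumes IV: "I \<subseteq> V" and j: "j \<in> I" and i: "i \<in> I" and z0: "z0 \<in> A"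
    and fh: "\<forall>x\<in>confs V A. f x i = h (restrict x I) i"
  shows "interaction_graph V A f (j,i) = interaction_graph I A h (j,i)"
  unfolding IG_alt using restr_allp[where f=f and h=h and i=i and j=j, OF IV j z0 fh] IV j i by auto

lemma dir1:
  assumes fin: "finite V" and A: "z0 \<in> A" and fo: "is_fun_over V A f" and IG: "interaction_graph V A f = G"
   and nil: "nilpotent V A f" and IV: "I \<subseteq> V" and init: "\<forall>(u,v)\<in>arcs G. u\<notin>I \<longrightarrow> v\<notin>I"
  shows "admits_nilpotent I A (induced G I)"
proof -
  define ex where "ex y = (\<lambda>v. if v\<in>I then y v else if v\<in>V then z0 else undefined)" for y :: "'a \<Rightarrow> int"
  define fI where "fI y = restrict (f (ex y)) I" for y
  have none: "\<forall>j\<in>V. j \<notin> I \<longrightarrow> interaction_graph V A f (j,i) = None" if "i \<in> I" for i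
    using init that IG unfolding arcs_def by (auto simp: domIff)
  have dep: "f x i = f x' i" if "i \<in> I" "x \<in> confs V A" "x' \<in> confs V A" "\<forall>v\<in>I. x v = x' v" for i x x'
    using nodep[OF none[OF that(1)] _ fin that(2,3,4)] that(1) IV by auto
  have exc: "ex y \<in> confs V A" if "y \<in> confs I A" for y
    using that IV A unfolding ex_def confs_def PiE_iff extensional_def by auto
  have rex: "restrict (ex y) I = y" if "y \<in> confs I A" for y
    using that unfolding ex_def confs_def PiE_iff extensional_def restrict_def by (auto intro!: ext)
  have fIc: "fI y \<in> confs I A" if "y \<in> confs I A" for y
  proof -
    have "f (ex y) \<in> confs V A" using fo exc[OF that] unfolding is_fun_over_def by auto
    then show ?thesis unfolding fI_def confs_def using IV by auto
  qed
  have rc: "restrict x I \<in> confs I A" if "x \<in> confs V A" for x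
    using that IV unfolding confs_def by auto
  have fh: "\<forall>x\<in>confs V A. f x i = fI (restrict x I) i" if "i \<in> I" for i
  proof
    fix x assume x: "x \<in> confs V A"
    have "f x i = f (ex (restrict x I)) i"
      by (rule dep[OF that x exc[OF rc[OF x]]]) (auto simp: ex_def)
    then show "f x i = fI (restrict x I) i" unfolding fI_def using that by simp
  qed
  have IGI: "interaction_graph I A fI = induced G I"
  proof (rule ext, clarify)
    fix j i
    show "interaction_graph I A fI (j,i) = induced G I (j,i)"
    proof (cases "j \<in> I \<and> i \<in> I")
      case True
      then show ?thesis using restr_IG[where f=f and h=fI and i=i and j=j, OF IV _ _ A fh[of i]] IG unfolding induced_def by auto
    next
      case False
      then show ?thesis unfolding IG_alt induced_def by auto
    qed
  qed
  obtain k c where kc: "\<forall>x\<in>confs V A. (f ^^ k) x = c" using nil unfolding nilpotent_def by auto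
  have it: "(fI ^^ m) y = restrict ((f ^^ m) (ex y)) I" if y: "y \<in> confs I A" for m y
  proof (induction m)
    case 0
    then show ?case using rex[OF y] by simp
  next
    case (Suc m)
    define W where "W = (f ^^ m) (ex y)"
    have Wc: "W \<in> confs V A" unfolding W_def by (rule funpow_in[OF fo exc[OF y]])
    have "(fI ^^ Suc m) y = fI (restrict W I)" by (simp only: funpow.simps o_apply Suc.IH W_def)
    also have "\<dots> = restrict (f W) I"
    proof (rule ext)
      fix v show "fI (restrict W I) v = restrict (f W) I v"
      proof (cases "v \<in> I")
        case True then show ?thesis using bspec[OF fh[OF True] Wc] by simp
      next
        case False then show ?thesis by (simp add: fI_def)
      qed
    qed
    finally show ?case unfolding W_def by simp
  qed
  have "nilpotent I A fI" unfolding nilpotent_def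
    using it kc exc by (auto intro!: exI[of _ k] exI[of _ "restrict c I"])
  moreover have "is_fun_over I A fI" unfolding is_fun_over_def using fIc by auto
  ultimately show ?thesis unfolding admits_nilpotent_def admits_def using IGI by auto
qed


definition comp :: "'v set \<Rightarrow> ('v \<times> 'v \<Rightarrow> sign option) \<Rightarrow> 'v \<Rightarrow> 'v set" where
  "comp V G v = {w \<in> V. (v, w) \<in> (arcs G)\<^sup>* \<and> (w, v) \<in> (arcs G)\<^sup>*}"

lemma sc_eq: assumes "strong_component V G I" "v \<in> I" shows "I = comp V G v"
proof -
  obtain u where u: "u \<in> V" "I = comp V G u" using assms(1) unfolding strong_component_def comp_def by auto
  have uv: "(u,v) \<in> (arcs G)\<^sup>*" "(v,u) \<in> (arcs G)\<^sup>*" using assms(2) u unfolding comp_def by auto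
  show ?thesis unfolding u(2) comp_def using uv by (auto intro: rtrancl_trans)
qed

lemma comp_sc: "v \<in> V \<Longrightarrow> strong_component V G (comp V G v)"
  unfolding strong_component_def comp_def by auto

lemma comp_self: "v \<in> V \<Longrightarrow> v \<in> comp V G v"
  unfolding comp_def by auto

lemma reach_init:
  assumes fin: "finite V" and sd: "signed_digraph V G" and v: "v \<in> V"
  shows "\<exists>z\<in>V. initial_strong_component V G (comp V G z) \<and> (z, v) \<in> (arcs G)\<^sup>*"
proof -
  let ?R = "arcs G"
  have RV: "?R \<subseteq> V \<times> V" using sd unfolding signed_digraph_def arcs_def by auto
  define anc where "anc w = {z \<in> V. (z, w) \<in> ?R\<^sup>*}" for w
  obtain z where z: "z \<in> anc v" and zmin: "\<forall>y. y \<in> anc v \<longrightarrow> card (anc z) \<le> card (anc y)"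
    using ex_has_least_nat[of "\<lambda>y. y \<in> anc v" v "\<lambda>y. card (anc y)"] v unfolding anc_def by auto
  have zV: "z \<in> V" and zv: "(z,v) \<in> ?R\<^sup>*" using z unfolding anc_def by auto
  have "initial_strong_component V G (comp V G z)"
    unfolding initial_strong_component_def
  proof (intro conjI comp_sc[OF zV] ballI, clarify)
    fix a b assume ab: "(a,b) \<in> ?R" and a: "a \<notin> comp V G z" and b: "b \<in> comp V G z"
    have aV: "a \<in> V" using ab RV by auto
    have bz: "(b,z) \<in> ?R\<^sup>*" using b unfolding comp_def by auto
    have az: "(a,z) \<in> ?R\<^sup>*" using ab bz by (auto intro: converse_rtrancl_into_rtrancl)
    have sub: "anc a \<subseteq> anc z" unfolding anc_def using az by (auto intro: rtrancl_trans)
    have "a \<in> anc v" unfolding anc_def using aV az zv by (auto intro: rtrancl_trans)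
    then have "card (anc z) \<le> card (anc a)" using zmin by auto
    moreover have "finite (anc z)" unfolding anc_def using fin by auto
    ultimately have "anc a = anc z" using sub by (metis card_subset_eq antisym card_mono)
    moreover have "z \<in> anc z" unfolding anc_def using zV by auto
    ultimately have "(z,a) \<in> ?R\<^sup>*" unfolding anc_def by auto
    then have "a \<in> comp V G z" unfolding comp_def using aV az by auto
    then show False using a by simp
  qed
  then show ?thesis using zV zv by auto
qed


lemma sign_thr_cong: assumes "lo \<le> t" "t < hi" "H \<noteq> L" "\<forall>y\<in>{lo..hi}. g y = (if t < y then H else L)"
  shows "signof {lo..hi} g = Some (if L < H then Pos else Neg)"
  using signof_cong[OF assms(4)] signof_thr[OF assms(1-3)] by simp

lemma sign_u:
  fixes lo hi cu :: int
  assumes lh: "lo < hi" and cu: "cu \<in> {lo..hi}" and s: "s \<noteq> Null"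
    and up: "up = (case s of Pos \<Rightarrow> cu < hi | Neg \<Rightarrow> \<not> cu < hi | Null \<Rightarrow> True)"
  shows "signof {lo..hi} (\<lambda>y. if (if cu < hi then cu < y else y < hi) then (if up then hi else lo) else (if up then lo else hi)) = Some s"
proof (cases s)
  case Pos
  show ?thesis
  proof (cases "cu < hi")
    case True
    then show ?thesis using sign_thr_cong[of lo cu hi hi lo] cu lh Pos up by auto
  next
    case False
    then show ?thesis using sign_thr_cong[of lo "hi - 1" hi hi lo] cu lh Pos up by auto
  qed
next
  case Neg
  show ?thesis
  proof (cases "cu < hi")
    case True
    then show ?thesis using sign_thr_cong[of lo cu hi lo hi] cu lh Neg up by auto
  next
    case False
    then show ?thesis using sign_thr_cong[of lo "hi - 1" hi lo hi] cu lh Neg up by auto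
  qed
next
  case Null then show ?thesis using s by simp
qed

lemma sign_u_null:
  fixes lo hi cu :: int
  assumes lh: "lo + 1 < hi" and cu: "cu \<in> {lo..hi}" and HL: "H \<noteq> L"
  shows "signof {lo..hi} (\<lambda>y. if (if lo < cu \<and> cu < hi then y = lo \<or> y = hi else y = lo + 1) then H else L) = Some Null"
proof (cases "lo < cu \<and> cu < hi")
  case True
  then show ?thesis using signof_null2[OF lh HL] by simp
next
  case False
  show ?thesis apply (subst if_not_P[OF False]) using signof_null1[of lo "lo+1" hi H L] lh HL by simp
qed

lemma sign_w:
  fixes lo hi :: int
  assumes lh: "lo < hi" and nl: "s = Null \<Longrightarrow> lo + 1 < hi"
  shows "signof {lo..hi} (\<lambda>y. if (case s of Null \<Rightarrow> y = lo \<or> y = hi | Pos \<Rightarrow> (if up then y = hi else y = lo)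
            | Neg \<Rightarrow> (if up then y = lo else y = hi)) then (if up then hi else lo) else (if up then lo else hi)) = Some s"
proof (cases s)
  case Null
  then show ?thesis using signof_null2[of lo hi "if up then hi else lo" "if up then lo else hi"] nl lh by simp
next
  case Pos
  show ?thesis
  proof (cases up)
    case True
    then show ?thesis using sign_thr_cong[of lo "hi - 1" hi hi lo] lh Pos by auto
  next
    case False
    then show ?thesis using sign_thr_cong[of lo lo hi hi lo] lh Pos by auto
  qed
next
  case Neg
  show ?thesis
  proof (cases up)
    case True
    then show ?thesis using sign_thr_cong[of lo lo hi lo hi] lh Neg by auto
  next
    case False
    then show ?thesis using sign_thr_cong[of lo "hi - 1" hi lo hi] lh Neg by auto
  qed
qed


fun chain :: "nat \<Rightarrow> ('a \<Rightarrow> 'a) \<Rightarrow> ('a \<Rightarrow> int) \<Rightarrow> ('a \<Rightarrow> int \<Rightarrow> int) \<Rightarrow> 'a \<Rightarrow> int" where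
  "chain 0 pr c0 F v = c0 v"
| "chain (Suc m) pr c0 F v = F v (chain m pr c0 F (pr v))"

lemma nil_strong:
  assumes fo: "is_fun_over I A f" and nil: "nilpotent I A f" and z: "z \<in> A"
  shows "\<exists>k c. c \<in> confs I A \<and> (\<forall>t\<ge>k. \<forall>y\<in>confs I A. (f ^^ t) y = c)"
proof -
  obtain k c where kc: "\<forall>x\<in>confs I A. (f ^^ k) x = c" using nil unfolding nilpotent_def by auto
  define y0 where "y0 = (\<lambda>v. if v \<in> I then z else undefined)"
  have y0c: "y0 \<in> confs I A" using z unfolding y0_def confs_def PiE_iff extensional_def by auto
  have cc: "c \<in> confs I A" using kc funpow_in[OF fo y0c, of k] y0c by auto
  have fy: "f y0 \<in> confs I A" using fo y0c unfolding is_fun_over_def by auto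
  have fc: "f c = c"
  proof -
    have "f c = f ((f ^^ k) y0)" using kc y0c by auto
    also have "\<dots> = (f ^^ k) (f y0)" by (simp add: funpow_swap1)
    also have "\<dots> = c" using kc fy by auto
    finally show ?thesis .
  qed
  have fxp: "(f ^^ m) c = c" for m by (induction m) (auto simp: fc)
  have "\<forall>t\<ge>k. \<forall>y\<in>confs I A. (f ^^ t) y = c"
  proof (intro allI impI ballI)
    fix t y assume t: "k \<le> t" and y: "y \<in> confs I A"
    have "(f ^^ t) y = (f ^^ (t - k)) ((f ^^ k) y)"
      using t by (metis funpow_add le_add_diff_inverse2 o_apply)
    then show "(f ^^ t) y = c" using kc y fxp by simp
  qed
  then show ?thesis using cc by blast
qed

lemma dir2:
  fixes V :: "'v set" and G lo hi
  assumes fin: "finite V" and sd: "signed_digraph V G" and lh: "lo < hi"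
   and comps: "\<forall>I. initial_strong_component V G I \<longrightarrow> admits_nilpotent I {lo..hi} (induced G I)"
   and nul: "\<forall>j i. G (j,i) = Some Null \<longrightarrow> lo + 1 < hi \<or> (\<exists>I. initial_strong_component V G I \<and> j\<in>I \<and> i\<in>I)"
  shows "admits_nilpotent V {lo..hi} G"
proof -
  define A where "A = {lo..hi}"
  define R where "R = arcs G"
  define isc where "isc I = initial_strong_component V G I" for I
  have loA: "lo \<in> A" "hi \<in> A" unfolding A_def using lh by auto
  have RV: "R \<subseteq> V \<times> V" using sd unfolding signed_digraph_def arcs_def R_def by auto
  have GV: "G (j,i) \<noteq> None \<Longrightarrow> j \<in> V \<and> i \<in> V" for j i using RV unfolding R_def arcs_def by auto
  define S where "S = {v\<in>V. isc (comp V G v)}"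
  have iscI: "isc I \<Longrightarrow> v \<in> I \<Longrightarrow> I = comp V G v \<and> v \<in> S \<and> v \<in> V" for I v
    using sc_eq[of V G I v] unfolding isc_def initial_strong_component_def S_def strong_component_def by auto
  have "\<forall>I. \<exists>f k c. isc I \<longrightarrow> admits I A (induced G I) f \<and> c \<in> confs I A \<and> (\<forall>t\<ge>k. \<forall>y\<in>confs I A. (f ^^ t) y = c)"
  proof
    fix I show "\<exists>f k c. isc I \<longrightarrow> admits I A (induced G I) f \<and> c \<in> confs I A \<and> (\<forall>t\<ge>k. \<forall>y\<in>confs I A. (f ^^ t) y = c)"
    proof (cases "isc I")
      case True
      then obtain f where f: "admits I A (induced G I) f" "nilpotent I A f"
        using comps unfolding isc_def admits_nilpotent_def A_def by auto
      then show ?thesis using nil_strong[OF _ f(2) loA(1)] unfolding admits_def by blast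
    qed auto
  qed
  then obtain ff kk cc where ffkc: "\<And>I. isc I \<Longrightarrow> admits I A (induced G I) (ff I) \<and> cc I \<in> confs I A \<and>
      (\<forall>t\<ge>kk I. \<forall>y\<in>confs I A. (ff I ^^ t) y = cc I)"
    by metis
  define K where "K = Max (kk ` {I. isc I})"
  have finI: "finite {I. isc I}"
  proof -
    have "{I. isc I} \<subseteq> Pow V" unfolding isc_def initial_strong_component_def strong_component_def by auto
    then show ?thesis using fin by (meson finite_Pow_iff finite_subset)
  qed
  have kK: "isc I \<Longrightarrow> kk I \<le> K" for I unfolding K_def using finI by auto

  define d where "d v = (LEAST m. \<exists>s\<in>S. (s,v) \<in> R ^^ m)" for v
  have D0: "\<exists>m. \<exists>s\<in>S. (s,v) \<in> R ^^ m" if vV: "v \<in> V" for v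
  proof -
    obtain z where z: "z \<in> V" "initial_strong_component V G (comp V G z)" "(z,v) \<in> R\<^sup>*"
      using reach_init[OF fin sd vV] unfolding R_def by auto
    have "z \<in> S" unfolding S_def isc_def using z by auto
    then show ?thesis using z(3) rtrancl_power by blast
  qed
  have D1: "\<exists>s\<in>S. (s,v) \<in> R ^^ (d v)" if "v \<in> V" for v
    unfolding d_def using D0[OF that] by (rule LeastI_ex)
  have Dle: "d v \<le> m" if "s \<in> S" "(s,v) \<in> R ^^ m" for v s m
    unfolding d_def using that by (auto intro: Least_le)
  have D2: "v \<in> S \<longleftrightarrow> d v = 0" if "v \<in> V" for v
  proof
    assume "v \<in> S" then show "d v = 0" using Dle[of v v 0] by auto
  next
    assume "d v = 0" then show "v \<in> S" using D1[OF that] by auto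
  qed
  have D3: "\<exists>u. (u,v) \<in> R \<and> Suc (d u) = d v" if vv: "v \<in> V" "v \<notin> S" for v
  proof -
    obtain m where m: "d v = Suc m" using D2 vv by (cases "d v") auto
    obtain s where s: "s \<in> S" "(s,v) \<in> R ^^ Suc m" using D1[OF vv(1)] m by auto
    obtain u where u: "(s,u) \<in> R ^^ m" "(u,v) \<in> R" using s(2) by (rule relpow_Suc_E)
    have "d u \<le> m" using Dle[OF s(1) u(1)] .
    moreover have "u \<in> V" using u(2) RV by auto
    then obtain s' where s': "s' \<in> S" "(s',u) \<in> R ^^ d u" using D1 by blast
    then have "(s',v) \<in> R ^^ Suc (d u)" using u(2) by auto
    then have "d v \<le> Suc (d u)" using Dle s'(1) by blast
    ultimately show ?thesis using m u(2) by (intro exI[of _ u]) auto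
  qed
  define pr where "pr v = (SOME u. (u,v) \<in> R \<and> Suc (d u) = d v)" for v
  have D4: "(pr v, v) \<in> R \<and> Suc (d (pr v)) = d v \<and> pr v \<in> V" if "v \<in> V" "v \<notin> S" for v
  proof -
    have "(pr v, v) \<in> R \<and> Suc (d (pr v)) = d v" unfolding pr_def using D3[OF that] by (rule someI_ex)
    then show ?thesis using RV by auto
  qed
  define su where "su v = the (G (pr v, v))" for v
  define upf where "upf v cu = (case su v of Null \<Rightarrow> True | Pos \<Rightarrow> cu < hi | Neg \<Rightarrow> \<not> cu < hi)" for v cu
  define Hv where "Hv v cu = (if upf v cu then hi else lo)" for v cu
  define Lv where "Lv v cu = (if upf v cu then lo else hi)" for v cu
  define c0 where "c0 v = cc (comp V G v) v" for v
  define c where "c v = chain (d v) pr c0 Lv v" for v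
  have cS: "c v = c0 v" if "v \<in> V" "v \<in> S" for v using D2 that unfolding c_def by simp
  have cN: "c v = Lv v (c (pr v))" if "v \<in> V" "v \<notin> S" for v
  proof -
    have "d v = Suc (d (pr v))" using D4[OF that] by simp
    then show ?thesis unfolding c_def by simp
  qed
  have cA: "\<forall>v\<in>V. d v = m \<longrightarrow> c v \<in> A" for m
  proof (induction m)
    case 0
    show ?case
    proof (intro ballI impI)
      fix v assume v: "v \<in> V" "d v = 0"
      then have vS: "v \<in> S" using D2 by auto
      then have i: "isc (comp V G v)" unfolding S_def by auto
      have "cc (comp V G v) \<in> confs (comp V G v) A" using ffkc[OF i] by auto
      then have "cc (comp V G v) v \<in> A" using comp_self[OF v(1)] unfolding confs_def by auto
      then show "c v \<in> A" using cS[OF v(1) vS] unfolding c0_def by simp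
    qed
  next
    case (Suc m)
    show ?case
    proof (intro ballI impI)
      fix v assume v: "v \<in> V" "d v = Suc m"
      then have "v \<notin> S" using D2 by auto
      then show "c v \<in> A" using cN[OF v(1)] loA unfolding Lv_def by auto
    qed
  qed
  then have cA': "v \<in> V \<Longrightarrow> c v \<in> A" for v by blast
  have nullok: "lo + 1 < hi" if "v \<in> V" "v \<notin> S" "G (w,v) = Some Null" for v w
    using nul that iscI unfolding isc_def by blast
  define Pw where "Pw v w y = (if w = pr v then (case su v of Null \<Rightarrow> (if lo < c (pr v) \<and> c (pr v) < hi then y = lo \<or> y = hi else y = lo + 1)
        | _ \<Rightarrow> (if c (pr v) < hi then c (pr v) < y else y < hi))
     else (case the (G (w,v)) of Null \<Rightarrow> y = lo \<or> y = hi | Pos \<Rightarrow> (if upf v (c (pr v)) then y = hi else y = lo)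
        | Neg \<Rightarrow> (if upf v (c (pr v)) then y = lo else y = hi)))" for v w y
  define Nv where "Nv v = {w. G (w,v) \<noteq> None}" for v
  define gad where "gad v x = (if \<forall>w\<in>Nv v. Pw v w (x w) then Hv v (c (pr v)) else Lv v (c (pr v)))" for v x
  define g where "g x = (\<lambda>v. if v \<in> V then (if v \<in> S then ff (comp V G v) (restrict x (comp V G v)) v else gad v x) else undefined)" for x
  have compS: "isc (comp V G v)" "v \<in> comp V G v" "comp V G v \<subseteq> V" if "v \<in> S" for v
    using that comp_self[of v V G] unfolding S_def comp_def by auto
  have gc: "g x \<in> confs V A" if x: "x \<in> confs V A" for x
  proof -
    have "g x v \<in> A" if v: "v \<in> V" for v
    proof (cases "v \<in> S")
      case True
      note cs = compS[OF True]
      have "restrict x (comp V G v) \<in> confs (comp V G v) A" using x cs(3) unfolding confs_def by auto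
      then have "ff (comp V G v) (restrict x (comp V G v)) \<in> confs (comp V G v) A"
        using ffkc[OF cs(1)] unfolding admits_def is_fun_over_def by auto
      then show ?thesis using cs(2) v True unfolding g_def confs_def by auto
    next
      case False
      then show ?thesis using v loA unfolding g_def gad_def Hv_def Lv_def by auto
    qed
    then show ?thesis unfolding confs_def PiE_iff extensional_def g_def by auto
  qed
  have ne: "\<exists>z\<in>A. Pw v w z" for v w
  proof -
    have l1: "lo + 1 \<in> A" using lh unfolding A_def by auto
    show ?thesis unfolding Pw_def
      using loA l1 lh
      by (cases "w = pr v"; cases "su v"; cases "the (G (w,v))"; cases "upf v (c (pr v))"; cases "c (pr v) < hi"; cases "lo < c (pr v) \<and> c (pr v) < hi") fastforce+
  qed
  have IGg: "interaction_graph V A g = G"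
  proof (rule ext, clarify)
    fix j i
    show "interaction_graph V A g (j,i) = G (j,i)"
    proof (cases "j \<in> V \<and> i \<in> V")
      case False
      then have "G (j,i) = None" using GV by blast
      then show ?thesis unfolding IG_alt using False by auto
    next
      case jiV: True
      show ?thesis
      proof (cases "i \<in> S")
        case iS: True
        define I where "I = comp V G i"
        note cs = compS[OF iS, folded I_def]
        have fh: "\<forall>x\<in>confs V A. g x i = ff I (restrict x I) i" using jiV iS unfolding g_def I_def by simp
        show ?thesis
        proof (cases "j \<in> I")
          case True
          have "interaction_graph V A g (j,i) = interaction_graph I A (ff I) (j,i)"
            by (rule restr_IG[where f=g and h="ff I" and i=i and j=j, OF cs(3) True cs(2) loA(1) fh])
          also have "\<dots> = induced G I (j,i)" using ffkc[OF cs(1)] unfolding admits_def by simp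
          finally show ?thesis unfolding induced_def using True cs(2) by simp
        next
          case False
          have Gn: "G (j,i) = None"
            using cs(1) False cs(2) unfolding isc_def initial_strong_component_def arcs_def by auto
          have "allp V A g j i (=)" unfolding allp_def
          proof clarify
            fix a b assume ab: "(a,b) \<in> jpairs V A j"
            then have "restrict a I = restrict b I" using False cs(3) unfolding jpairs_def restrict_def by (fastforce intro!: ext)
            moreover have "a \<in> confs V A" "b \<in> confs V A" using ab unfolding jpairs_def by auto
            ultimately show "g a i = g b i" using fh by simp
          qed
          then show ?thesis unfolding IG_alt using Gn by simp
        qed
      next
        case iN: False
        define cu where "cu = c (pr i)"
        have cuA: "cu \<in> A" unfolding cu_def using cA' D4 jiV iN by auto
        have fi: "\<forall>x\<in>confs V A. g x i = (if \<forall>w\<in>Nv i. Pw i w (x w) then Hv i cu else Lv i cu)"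
          using jiV iN unfolding g_def gad_def cu_def by simp
        have NvV: "Nv i \<subseteq> V" unfolding Nv_def using GV by auto
        have IGe: "interaction_graph V A g (j,i) = (if j \<in> Nv i then signof A (\<lambda>y. if Pw i j y then Hv i cu else Lv i cu) else None)"
          by (rule gadget_IG[where f=g and N="Nv i" and Pw="Pw i" and i=i and j=j, OF fi NvV _ _ _ loA(1)])
            (use jiV ne in auto)
        show ?thesis
        proof (cases "j \<in> Nv i")
          case False
          then show ?thesis using IGe unfolding Nv_def by auto
        next
          case True
          then obtain s where s: "G (j,i) = Some s" unfolding Nv_def by auto
          show ?thesis
          proof (cases "j = pr i")
            case jp: True
            have sus: "su i = s" unfolding su_def using s jp by simp
            show ?thesis
            proof (cases "s = Null")
              case True
              have "(\<lambda>y. if Pw i j y then Hv i cu else Lv i cu) = (\<lambda>y. if (if lo < cu \<and> cu < hi then y = lo \<or> y = hi else y = lo + 1) then Hv i cu else Lv i cu)"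
                unfolding Pw_def using jp sus True cu_def by simp
              moreover have "Hv i cu \<noteq> Lv i cu" unfolding Hv_def Lv_def using lh by auto
              ultimately show ?thesis using IGe True sign_u_null[OF nullok[of i j] cuA[unfolded A_def]] jiV iN s \<open>j \<in> Nv i\<close>
                unfolding A_def by simp
            next
              case False
              have "(\<lambda>y. if Pw i j y then Hv i cu else Lv i cu) = (\<lambda>y. if (if cu < hi then cu < y else y < hi) then (if upf i cu then hi else lo) else (if upf i cu then lo else hi))"
                unfolding Pw_def Hv_def Lv_def using jp sus False cu_def by (cases s) auto
              moreover have "upf i cu = (case s of Pos \<Rightarrow> cu < hi | Neg \<Rightarrow> \<not> cu < hi | Null \<Rightarrow> True)"
                unfolding upf_def sus ..
              ultimately show ?thesis using IGe sign_u[OF lh cuA[unfolded A_def] False] s \<open>j \<in> Nv i\<close>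
                unfolding A_def by simp
            qed
          next
            case jp: False
            have "(\<lambda>y. if Pw i j y then Hv i cu else Lv i cu) = (\<lambda>y. if (case s of Null \<Rightarrow> y = lo \<or> y = hi | Pos \<Rightarrow> (if upf i cu then y = hi else y = lo)
                | Neg \<Rightarrow> (if upf i cu then y = lo else y = hi)) then (if upf i cu then hi else lo) else (if upf i cu then lo else hi))"
              unfolding Pw_def Hv_def Lv_def cu_def using jp s by simp
            then show ?thesis using IGe sign_w[OF lh, of s "upf i cu"] nullok[of i j] jiV iN s \<open>j \<in> Nv i\<close>
              unfolding A_def by simp
          qed
        qed
      qed
    qed
  qed
  have fo: "is_fun_over V A g" unfolding is_fun_over_def using gc by auto
  have N1: "restrict ((g ^^ t) x) I = (ff I ^^ t) (restrict x I)" if I: "isc I" and x: "x \<in> confs V A" for I t x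
  proof (induction t)
    case 0
    then show ?case by simp
  next
    case (Suc t)
    define W where "W = (g ^^ t) x"
    have Wc: "W \<in> confs V A" unfolding W_def by (rule funpow_in[OF fo x])
    have IV: "I \<subseteq> V" using I unfolding isc_def initial_strong_component_def strong_component_def by auto
    have rW: "restrict W I \<in> confs I A" using Wc IV unfolding confs_def by auto
    have fo': "ff I (restrict W I) \<in> confs I A" using ffkc[OF I] rW unfolding admits_def is_fun_over_def by auto
    have "restrict (g W) I = ff I (restrict W I)"
    proof (rule ext)
      fix v show "restrict (g W) I v = ff I (restrict W I) v"
      proof (cases "v \<in> I")
        case True
        then have "I = comp V G v" "v \<in> S" "v \<in> V" using iscI[OF I] by auto
        then show ?thesis using True unfolding g_def by simp
      next
        case False
        then show ?thesis using fo' unfolding confs_def PiE_iff extensional_def by simp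
      qed
    qed
    then show ?case using Suc.IH unfolding W_def by simp
  qed
  have N2: "(g ^^ t) x v = c v" if v: "v \<in> S" and t: "K \<le> t" and x: "x \<in> confs V A" for v t x
  proof -
    define I where "I = comp V G v"
    note cs = compS[OF v, folded I_def]
    have rx: "restrict x I \<in> confs I A" using x cs(3) unfolding confs_def by auto
    have "(g ^^ t) x v = restrict ((g ^^ t) x) I v" using cs(2) by simp
    also have "\<dots> = (ff I ^^ t) (restrict x I) v" using N1[OF cs(1) x] by simp
    also have "\<dots> = cc I v" using ffkc[OF cs(1)] kK[OF cs(1)] t rx by auto
    finally show ?thesis using cS[OF cs(3)[THEN subsetD, OF cs(2)] v] unfolding c0_def I_def by simp
  qed
  have N3: "\<forall>v\<in>V. d v = m \<longrightarrow> (\<forall>t\<ge>K+m. \<forall>x\<in>confs V A. (g ^^ t) x v = c v)" for m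
  proof (induction m)
    case 0
    then show ?case using N2 D2 by auto
  next
    case (Suc m)
    show ?case
    proof (intro ballI impI allI)
      fix v t x assume v: "v \<in> V" "d v = Suc m" and t: "K + Suc m \<le> t" and x: "x \<in> confs V A"
      have vS: "v \<notin> S" using D2 v by auto
      note p = D4[OF v(1) vS]
      obtain t' where t': "t = Suc t'" "K + m \<le> t'" using t by (cases t) auto
      define y where "y = (g ^^ t') x"
      have yu: "y (pr v) = c (pr v)" using Suc.IH p v t' x unfolding y_def by auto
      have uN: "pr v \<in> Nv v" using p unfolding Nv_def R_def arcs_def by auto
      have cuA: "c (pr v) \<in> A" using cA' p by auto
      have nP: "\<not> Pw v (pr v) (c (pr v))"
      proof (cases "su v = Null")
        case True
        then have "G (pr v, v) = Some Null" using p unfolding su_def R_def arcs_def by auto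
        then have "lo + 1 < hi" using nullok v vS by blast
        then show ?thesis unfolding Pw_def using True cuA unfolding A_def by auto
      next
        case False
        then show ?thesis unfolding Pw_def by (cases "su v") auto
      qed
      have "(g ^^ t) x v = g y v" unfolding y_def t' by simp
      also have "\<dots> = Lv v (c (pr v))" using v vS yu uN nP unfolding g_def gad_def by auto
      also have "\<dots> = c v" using cN[OF v(1) vS] by simp
      finally show "(g ^^ t) x v = c v" .
    qed
  qed
  define Dm where "Dm = Max (d ` V)"
  have "\<forall>x\<in>confs V A. (g ^^ (K + Dm)) x = (\<lambda>v. if v \<in> V then c v else undefined)"
  proof
    fix x assume x: "x \<in> confs V A"
    show "(g ^^ (K + Dm)) x = (\<lambda>v. if v \<in> V then c v else undefined)"
    proof (rule ext)
      fix v show "(g ^^ (K + Dm)) x v = (if v \<in> V then c v else undefined)"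
      proof (cases "v \<in> V")
        case True
        have "d v \<le> Dm" unfolding Dm_def using fin True by auto
        then show ?thesis using N3[of "d v"] True x by auto
      next
        case False
        then show ?thesis using funpow_in[OF fo x, of "K + Dm"] unfolding confs_def PiE_iff extensional_def by auto
      qed
    qed
  qed
  then have "nilpotent V A g" unfolding nilpotent_def by blast
  then show ?thesis unfolding admits_nilpotent_def admits_def A_def[symmetric] using fo IGg by blast
qed

theorem proposition3:
  fixes n :: nat and lo hi :: int and G :: "nat \<times> nat \<Rightarrow> sign option"
  assumes "lo \<le> hi"
    and "signed_digraph {1..n} G"
  shows "(admits_nilpotent {1..n} {lo..hi} G \<longrightarrow>
            (\<forall>I. initial_strong_component {1..n} G I \<longrightarrow>
                 admits_nilpotent I {lo..hi} (induced G I)))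
       \<and> (((\<forall>I. initial_strong_component {1..n} G I \<longrightarrow>
                 admits_nilpotent I {lo..hi} (induced G I))
            \<and> (card {lo..hi} \<ge> 3 \<or>
               (card {lo..hi} = 2 \<and>
                (\<forall>j i. G (j, i) = Some Null \<longrightarrow>
                   (\<exists>I. initial_strong_component {1..n} G I \<and> j \<in> I \<and> i \<in> I)))))
          \<longrightarrow> admits_nilpotent {1..n} {lo..hi} G)"
proof (intro conjI impI allI)
  fix I assume an: "admits_nilpotent {1..n} {lo..hi} G" and I: "initial_strong_component {1..n} G I"
  obtain f where f: "admits {1..n} {lo..hi} G f" "nilpotent {1..n} {lo..hi} f"
    using an unfolding admits_nilpotent_def by auto
  show "admits_nilpotent I {lo..hi} (induced G I)"
    apply (rule dir1[of "{1..n}" lo "{lo..hi}" f G])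
    using f I assms(1) unfolding admits_def initial_strong_component_def strong_component_def by auto
next
  assume H: "(\<forall>I. initial_strong_component {1..n} G I \<longrightarrow> admits_nilpotent I {lo..hi} (induced G I)) \<and>
    (3 \<le> card {lo..hi} \<or> card {lo..hi} = 2 \<and>
       (\<forall>j i. G (j, i) = Some Null \<longrightarrow> (\<exists>I. initial_strong_component {1..n} G I \<and> j \<in> I \<and> i \<in> I)))"
  have lh: "lo < hi" using H by auto
  have nul: "\<forall>j i. G (j,i) = Some Null \<longrightarrow> lo + 1 < hi \<or> (\<exists>I. initial_strong_component {1..n} G I \<and> j\<in>I \<and> i\<in>I)"
    using H by auto
  show "admits_nilpotent {1..n} {lo..hi} G"
    by (rule dir2[OF _ assms(2) lh _ nul]) (use H in auto)
qed
end
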